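(* Let $M$ be a $0/1$-matrix, let $B$ be a block of $M$, let $i$ be an entry of the input boundary $B^-$, and let $\sigma_1(i),\sigma_2(i)$ be two entries of the output boundary $B^+$ that are both reachable from $i$, with $\sigma_1(i)<\sigma_2(i)$ in the output-boundary order. If there is an entry $\sigma(j)$ of $B^+$ that is reachable from some entry $j\in B^-$ and satisfies $\sigma_1(i)<\sigma(j)<\sigma_2(i)$, then $\sigma(j)$ is also reachable from $i$.
   Context: Let $M$ be an $m\times n$ $0/1$-matrix with entries indexed $(r,s)$ (rows increasing from bottom to top, columns from left to right). A path from $(k,l)$ to $(i,j)$ is a sequence of $1$-entries starting at $(k,l)$ and ending at $(i,j)$ in which each step goes from $(r,s)$ to $(r+1,s)$, $(r,s+1)$ or $(r+1,s+1)$; $(i,j)$ is reachable from $(k,l)$ if such a path exists. A block $B$ is the submatrix formed by rows $r^-\le r\le r^+$ and columns $s^-\le s\le s^+$. Its input boundary $B^-$ consists of the entries in row $r^-$ or column $s^-$ of $B$, ordered: first row $r^-$ from column $s^+$ down to $s^-$, then the remaining entries of column $s^-$ from row $r^-+1$ up to $r^+$. Its output boundary $B^+$ consists of the entries in row $r^+$ or column $s^+$ of $B$, ordered: first column $s^+$ from row $r^-$ up to $r^+$, then the remaining entries of row $r^+$ from column $s^+-1$ down to $s^-$. *)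

theory Defs
  imports Main
begin

text \<open>An m x n 0/1-matrix is a function M :: nat => nat => nat (row r, column s),
  with rows 1..m (increasing bottom to top) and columns 1..n (left to right).
  Entries are pairs (r, s).\<close>

definition zero_one_matrix :: "nat \<Rightarrow> nat \<Rightarrow> (nat \<Rightarrow> nat \<Rightarrow> nat) \<Rightarrow> bool" where
  "zero_one_matrix m n M \<longleftrightarrow> (\<forall>r s. 1 \<le> r \<and> r \<le> m \<and> 1 \<le> s \<and> s \<le> n \<longrightarrow> M r s \<in> {0, 1})"

definition in_matrix :: "nat \<Rightarrow> nat \<Rightarrow> nat \<times> nat \<Rightarrow> bool" where
  "in_matrix m n x \<longleftrightarrow> 1 \<le> fst x \<and> fst x \<le> m \<and> 1 \<le> snd x \<and> snd x \<le> n"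

definition path_step :: "nat \<times> nat \<Rightarrow> nat \<times> nat \<Rightarrow> bool" where
  "path_step x y \<longleftrightarrow>
     y = (fst x + 1, snd x) \<or> y = (fst x, snd x + 1) \<or> y = (fst x + 1, snd x + 1)"

definition is_path :: "nat \<Rightarrow> nat \<Rightarrow> (nat \<Rightarrow> nat \<Rightarrow> nat) \<Rightarrow> (nat \<times> nat) list \<Rightarrow> bool" where
  "is_path m n M p \<longleftrightarrow> p \<noteq> [] \<and>
     (\<forall>x \<in> set p. in_matrix m n x \<and> M (fst x) (snd x) = 1) \<and>
     (\<forall>k. Suc k < length p \<longrightarrow> path_step (p ! k) (p ! Suc k))"

definition reachable :: "nat \<Rightarrow> nat \<Rightarrow> (nat \<Rightarrow> nat \<Rightarrow> nat) \<Rightarrow> nat \<times> nat \<Rightarrow> nat \<times> nat \<Rightarrow> bool" where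
  "reachable m n M x y \<longleftrightarrow> (\<exists>p. is_path m n M p \<and> hd p = x \<and> last p = y)"

definition is_block :: "nat \<Rightarrow> nat \<Rightarrow> nat \<Rightarrow> nat \<Rightarrow> nat \<Rightarrow> nat \<Rightarrow> bool" where
  "is_block m n rl ru sl su \<longleftrightarrow> 1 \<le> rl \<and> rl \<le> ru \<and> ru \<le> m \<and> 1 \<le> sl \<and> sl \<le> su \<and> su \<le> n"

definition in_block :: "nat \<Rightarrow> nat \<Rightarrow> nat \<Rightarrow> nat \<Rightarrow> nat \<times> nat \<Rightarrow> bool" where
  "in_block rl ru sl su x \<longleftrightarrow> rl \<le> fst x \<and> fst x \<le> ru \<and> sl \<le> snd x \<and> snd x \<le> su"

definition input_boundary :: "nat \<Rightarrow> nat \<Rightarrow> nat \<Rightarrow> nat \<Rightarrow> (nat \<times> nat) set" where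
  "input_boundary rl ru sl su = {x. in_block rl ru sl su x \<and> (fst x = rl \<or> snd x = sl)}"

definition output_boundary :: "nat \<Rightarrow> nat \<Rightarrow> nat \<Rightarrow> nat \<Rightarrow> (nat \<times> nat) set" where
  "output_boundary rl ru sl su = {x. in_block rl ru sl su x \<and> (fst x = ru \<or> snd x = su)}"

text \<open>Position in the order of B^+: first column su from row rl up to ru
  (positions 0 .. ru-rl), then row ru from column su-1 down to sl.\<close>
definition output_pos :: "nat \<Rightarrow> nat \<Rightarrow> nat \<Rightarrow> nat \<Rightarrow> nat \<times> nat \<Rightarrow> nat" where
  "output_pos rl ru sl su x = (if snd x = su then fst x - rl else (ru - rl) + (su - snd x))"

definition output_less :: "nat \<Rightarrow> nat \<Rightarrow> nat \<Rightarrow> nat \<Rightarrow> nat \<times> nat \<Rightarrow> nat \<times> nat \<Rightarrow> bool" where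
  "output_less rl ru sl su x y \<longleftrightarrow> output_pos rl ru sl su x < output_pos rl ru sl su y"

end

theory Submission
  imports Defs
begin

fun chain :: "(nat \<times> nat) list \<Rightarrow> bool" where
  "chain [] = True"
| "chain [x] = True"
| "chain (x # y # xs) = (path_step x y \<and> chain (y # xs))"

lemma chain_iff: "chain p \<longleftrightarrow> (\<forall>k. Suc k < length p \<longrightarrow> path_step (p ! k) (p ! Suc k))"
proof (induction p rule: chain.induct)
  case (3 x y xs)
  show ?case
  proof
    assume "chain (x # y # xs)"
    then show "\<forall>k. Suc k < length (x # y # xs) \<longrightarrow> path_step ((x # y # xs) ! k) ((x # y # xs) ! Suc k)"
      using 3 by (auto simp: less_Suc_eq_0_disj)
  next
    assume h: "\<forall>k. Suc k < length (x # y # xs) \<longrightarrow> path_step ((x # y # xs) ! k) ((x # y # xs) ! Suc k)"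
    have "path_step x y" using h[rule_format, of 0] by simp
    moreover have "\<forall>k. Suc k < length (y # xs) \<longrightarrow> path_step ((y # xs) ! k) ((y # xs) ! Suc k)"
      using h by (metis Suc_less_eq length_Cons nth_Cons_Suc)
    ultimately show "chain (x # y # xs)" using 3 by simp
  qed
qed auto

lemma is_path_iff: "is_path m n M p \<longleftrightarrow> p \<noteq> [] \<and>
     (\<forall>x \<in> set p. in_matrix m n x \<and> M (fst x) (snd x) = 1) \<and> chain p"
  unfolding is_path_def chain_iff by simp

lemma chain_append_iff: "chain (xs @ y # ys) \<longleftrightarrow> chain (xs @ [y]) \<and> chain (y # ys)"
proof (induction xs)
  case Nil
  then show ?case by simp
next
  case (Cons a xs)
  then show ?case by (cases xs) auto
qed

lemma chain_Cons: "chain (x # xs) \<Longrightarrow> chain xs"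
  by (cases xs) auto

lemma head_mono: "chain (x # xs) \<Longrightarrow> y \<in> set xs \<Longrightarrow> fst x \<le> fst y \<and> snd x \<le> snd y"
proof (induction xs arbitrary: x)
  case Nil
  then show ?case by simp
next
  case (Cons a xs)
  have st: "path_step x a" and ch: "chain (a # xs)" using Cons.prems by auto
  have xa: "fst x \<le> fst a \<and> snd x \<le> snd a" using st by (auto simp: path_step_def)
  show ?case
  proof (cases "y = a")
    case True then show ?thesis using xa by simp
  next
    case False
    then have "y \<in> set xs" using Cons.prems by simp
    from Cons.IH[OF ch this] xa show ?thesis by auto
  qed
qed

lemma chain_le: "chain (xs @ ys) \<Longrightarrow> x \<in> set xs \<Longrightarrow> y \<in> set ys \<Longrightarrow> fst x \<le> fst y \<and> snd x \<le> snd y"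
proof (induction xs)
  case Nil
  then show ?case by simp
next
  case (Cons a xs)
  show ?case
  proof (cases "x = a")
    case True
    then show ?thesis using head_mono[of a "xs @ ys" y] Cons.prems by simp
  next
    case False
    then show ?thesis using Cons chain_Cons[of a "xs @ ys"] by simp
  qed
qed

lemma bounds:
  assumes "chain P" "P \<noteq> []" "x \<in> set P"
  shows "fst (hd P) \<le> fst x \<and> snd (hd P) \<le> snd x \<and> fst x \<le> fst (last P) \<and> snd x \<le> snd (last P)"
proof -
  have 1: "P = hd P # tl P" using assms by simp
  have 2: "P = butlast P @ [last P]" using assms by simp
  have a: "fst (hd P) \<le> fst x \<and> snd (hd P) \<le> snd x"
  proof (cases "x = hd P")
    case False
    then have "x \<in> set (tl P)" using assms 1 by (metis set_ConsD)
    then show ?thesis using head_mono[of "hd P" "tl P" x] assms 1 by simp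
  qed simp
  have b: "fst x \<le> fst (last P) \<and> snd x \<le> snd (last P)"
  proof (cases "x = last P")
    case False
    then have "x \<in> set (butlast P)" using assms 2
      by (metis Un_iff empty_iff empty_set set_ConsD set_append)
    then show ?thesis using chain_le[of "butlast P" "[last P]" x "last P"] assms 2 by simp
  qed simp
  from a b show ?thesis by simp
qed

lemma before:
  assumes "chain P" "p \<in> set P" "p' \<in> set P" "fst p < fst p'"
  shows "snd p \<le> snd p'"
proof -
  obtain xs ys where P: "P = xs @ p # ys" using assms(2) by (meson split_list)
  have "p' \<in> set xs \<or> p' = p \<or> p' \<in> set ys" using assms(3) P by auto
  moreover have "p' \<notin> set xs"
    using chain_le[of xs "p # ys" p' p] assms P by auto
  moreover have "p' \<in> set ys \<Longrightarrow> ?thesis"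
    using chain_le[of "xs @ [p]" ys p p'] assms P by auto
  ultimately show ?thesis using assms by auto
qed

lemma coverage: "chain P \<Longrightarrow> P \<noteq> [] \<Longrightarrow> fst (hd P) \<le> r \<Longrightarrow> r \<le> fst (last P) \<Longrightarrow> \<exists>x\<in>set P. fst x = r"
proof (induction P)
  case Nil
  then show ?case by simp
next
  case (Cons x xs)
  show ?case
  proof (cases "r = fst x")
    case True then show ?thesis by simp
  next
    case False
    then have xs: "xs \<noteq> []" using Cons.prems by auto
    then obtain y ys where y: "xs = y # ys" by (cases xs) auto
    have "path_step x y" using Cons.prems y by simp
    then have "fst y \<le> fst x + 1" by (auto simp: path_step_def)
    then have "fst (hd xs) \<le> r" using False Cons.prems y by simp
    moreover have "r \<le> fst (last xs)" using Cons.prems xs by simp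
    ultimately show ?thesis using Cons.IH xs chain_Cons Cons.prems by auto
  qed
qed

lemma cross:
  "chain Q \<Longrightarrow> Q \<noteq> [] \<Longrightarrow> chain P \<Longrightarrow> (\<forall>q\<in>set Q. \<exists>p\<in>set P. fst p = fst q)
   \<Longrightarrow> (\<exists>p\<in>set P. fst p = fst (hd Q) \<and> snd (hd Q) < snd p)
   \<Longrightarrow> (\<forall>p\<in>set P. fst p = fst (last Q) \<longrightarrow> snd p < snd (last Q))
   \<Longrightarrow> \<exists>z. z \<in> set P \<and> z \<in> set Q"
proof (induction Q)
  case Nil
  then show ?case by simp
next
  case (Cons q Q')
  show ?case
  proof (cases "Q' = []")
    case True
    then show ?thesis using Cons.prems by fastforce
  next
    case False
    then obtain q1 rest where q1: "Q' = q1 # rest" by (cases Q') auto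
    show ?thesis
    proof (cases "q1 \<in> set P")
      case True then show ?thesis using q1 by (intro exI[of _ q1]) simp
    next
      case notin: False
      show ?thesis
      proof (cases "\<exists>p\<in>set P. fst p = fst q1 \<and> snd q1 < snd p")
        case True
        have "\<exists>z. z \<in> set P \<and> z \<in> set Q'"
          using Cons.IH[OF chain_Cons[OF Cons.prems(1)] False Cons.prems(3)] Cons.prems True q1 False
          by auto
        then show ?thesis by auto
      next
        case nl: False
        have right: "\<forall>p\<in>set P. fst p = fst q1 \<longrightarrow> snd p < snd q1"
        proof (intro ballI impI)
          fix p assume p: "p \<in> set P" "fst p = fst q1"
          have "snd p \<le> snd q1" using nl p by auto
          moreover have "p \<noteq> q1" using notin p by auto
          ultimately show "snd p < snd q1" using p by (cases p, cases q1) auto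
        qed
        obtain p0 where p0: "p0 \<in> set P" "fst p0 = fst q" "snd q < snd p0" using Cons.prems(5) by auto
        obtain p' where p': "p' \<in> set P" "fst p' = fst q1" using Cons.prems(4) q1 by auto
        have st: "path_step q q1" using Cons.prems(1) q1 by simp
        show ?thesis
        proof (cases "q1 = (fst q, snd q + 1)")
          case True
          then show ?thesis using right p0 by fastforce
        next
          case False
          then have f: "fst q1 = fst q + 1" "snd q1 \<le> snd q + 1" using st by (auto simp: path_step_def)
          have "snd p0 \<le> snd p'" using before[OF Cons.prems(3) p0(1) p'(1)] p0 p' f by simp
          moreover have "snd p' < snd q1" using right p' by auto
          ultimately show ?thesis using p0 f by simp
        qed
      qed
    qed
  qed
qed

lemma reach_prefix: "is_path m n M P \<Longrightarrow> z \<in> set P \<Longrightarrow> reachable m n M (hd P) z"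
proof -
  assume a: "is_path m n M P" "z \<in> set P"
  obtain xs ys where P: "P = xs @ z # ys" using a(2) by (meson split_list)
  have cP: "chain P" using a(1) unfolding is_path_iff by simp
  then have ch: "chain (xs @ [z])" "chain (z # ys)" using P by (metis chain_append_iff)+
  have "is_path m n M (xs @ [z])" using a P ch unfolding is_path_iff by auto
  moreover have "hd (xs @ [z]) = hd P" using P by (cases xs) auto
  ultimately show ?thesis unfolding reachable_def by (metis last_snoc)
qed

lemma reach_suffix: "is_path m n M P \<Longrightarrow> z \<in> set P \<Longrightarrow> reachable m n M z (last P)"
proof -
  assume a: "is_path m n M P" "z \<in> set P"
  obtain xs ys where P: "P = xs @ z # ys" using a(2) by (meson split_list)
  have cP: "chain P" using a(1) unfolding is_path_iff by simp
  then have ch: "chain (xs @ [z])" "chain (z # ys)" using P by (metis chain_append_iff)+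
  have "is_path m n M (z # ys)" using a P ch unfolding is_path_iff by auto
  moreover have "last (z # ys) = last P" using P by simp
  ultimately show ?thesis unfolding reachable_def by (metis list.sel(1))
qed

lemma reach_trans: "reachable m n M x y \<Longrightarrow> reachable m n M y z \<Longrightarrow> reachable m n M x z"
proof -
  assume "reachable m n M x y" "reachable m n M y z"
  then obtain p q where p: "is_path m n M p" "hd p = x" "last p = y"
    and q: "is_path m n M q" "hd q = y" "last q = z" unfolding reachable_def by auto
  have p2: "p = butlast p @ [y]" using p unfolding is_path_iff by (metis append_butlast_last_id)
  have q2: "q = y # tl q" using q unfolding is_path_iff by (metis list.collapse)
  have "chain (butlast p @ y # tl q)"
    using p q p2 q2 unfolding is_path_iff by (metis chain_append_iff)
  moreover have "set (butlast p @ y # tl q) \<subseteq> set p \<union> set q"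
    using p2 q2 by (metis Un_iff append_Cons append_Nil set_append subsetI)
  ultimately have "is_path m n M (butlast p @ y # tl q)"
    using p q unfolding is_path_iff by auto
  moreover have "hd (butlast p @ y # tl q) = x" using p2 p(2) by (metis hd_append2 append_self_conv2 hd_append list.sel(1))
  moreover have "last (butlast p @ y # tl q) = z" using q2 q(3) by (metis last_appendR list.distinct(1))
  ultimately show ?thesis unfolding reachable_def by blast
qed

lemma chain_swap: "chain (map prod.swap P) = chain P"
  by (induction P rule: chain.induct) (auto simp: path_step_def)

lemma reach_swap:
  assumes "reachable m n M x y"
  shows "reachable n m (\<lambda>r s. M s r) (prod.swap x) (prod.swap y)"
proof -
  obtain p where p: "is_path m n M p" "hd p = x" "last p = y" using assms unfolding reachable_def by auto
  have "is_path n m (\<lambda>r s. M s r) (map prod.swap p)"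
    using p(1) unfolding is_path_iff chain_swap by (auto simp: in_matrix_def)
  moreover have "hd (map prod.swap p) = prod.swap x" "last (map prod.swap p) = prod.swap y"
    using p unfolding is_path_iff by (auto simp: hd_map last_map)
  ultimately show ?thesis unfolding reachable_def by blast
qed

lemma main:
  assumes blk: "is_block m n rl ru sl su"
    and i: "i \<in> input_boundary rl ru sl su" and j: "j \<in> input_boundary rl ru sl su"
    and ca: "snd c = su" and a1: "snd a = su" and a2: "fst a < fst c"
    and b1: "fst c \<le> fst b" and b2: "snd b \<le> su"
    and ria: "reachable m n M i a" and rib: "reachable m n M i b" and rjc: "reachable m n M j c"
  shows "reachable m n M i c"
proof -
  obtain P1 where P1: "is_path m n M P1" "hd P1 = i" "last P1 = a" using ria unfolding reachable_def by auto
  obtain P2 where P2: "is_path m n M P2" "hd P2 = i" "last P2 = b" using rib unfolding reachable_def by auto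
  obtain Q where Q: "is_path m n M Q" "hd Q = j" "last Q = c" using rjc unfolding reachable_def by auto
  have c1: "chain P1" "P1 \<noteq> []" using P1 unfolding is_path_iff by auto
  have c2: "chain P2" "P2 \<noteq> []" using P2 unfolding is_path_iff by auto
  have cq: "chain Q" "Q \<noteq> []" using Q unfolding is_path_iff by auto
  have iP1: "i \<in> set P1" using P1 c1 by (metis hd_in_set)
  have iP2: "i \<in> set P2" using P2 c2 by (metis hd_in_set)
  have aP1: "a \<in> set P1" using P1 c1 by (metis last_in_set)
  have jQ: "j \<in> set Q" using Q cq by (metis hd_in_set)
  note bP1 = bounds[OF c1, unfolded P1(2,3)]
  note bP2 = bounds[OF c2, unfolded P2(2,3)]
  note bQ = bounds[OF cq, unfolded Q(2,3)]
  have ib: "rl \<le> fst i" "sl \<le> snd i" using i unfolding input_boundary_def in_block_def by auto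
  have jb: "rl \<le> fst j" "fst j = rl \<or> snd j = sl" using j unfolding input_boundary_def in_block_def by auto
  have ia: "fst i \<le> fst a" using bP1[OF aP1] by simp
  have jc: "fst j \<le> fst c" using bQ[OF jQ] by simp
  have key: "\<exists>z. (z \<in> set P1 \<or> z \<in> set P2) \<and> z \<in> set Q"
  proof (rule ccontr)
    assume nm: "\<not> ?thesis"
    have rightc: "\<forall>p\<in>set P2. fst p = fst c \<longrightarrow> snd p < snd c"
    proof (intro ballI impI)
      fix p assume p: "p \<in> set P2" "fst p = fst c"
      have "snd p \<le> snd c" using bP2[OF p(1)] b2 ca by simp
      moreover have "p \<noteq> c" using nm p Q cq by (metis last_in_set)
      ultimately show "snd p < snd c" using p by (cases p, cases c) auto
    qed
    show False
    proof (cases "fst j \<le> fst i")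
      case True
      obtain x where x: "x \<in> set Q" "fst x = fst i"
        using coverage[OF cq, of "fst i"] True Q ia a2 by auto
      consider "snd x = snd i" | "snd x < snd i" | "snd i < snd x" by linarith
      then show False
      proof cases
        case 1
        then have "x = i" using x by (cases x, cases i) auto
        then show False using nm iP1 x by blast
      next
        case 2
        obtain xs ys where Qs: "Q = xs @ x # ys" using x(1) by (meson split_list)
        have chq: "chain (x # ys)" using cq Qs by (metis chain_append_iff)
        have cov: "\<forall>q\<in>set (x # ys). \<exists>p\<in>set P2. fst p = fst q"
        proof
          fix q assume q: "q \<in> set (x # ys)"
          have "fst x \<le> fst q" using q head_mono[OF chq, of q] by (cases "q = x") auto
          moreover have "fst q \<le> fst c" using bQ[of q] q Qs by auto
          ultimately show "\<exists>p\<in>set P2. fst p = fst q"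
            using coverage[OF c2, of "fst q"] P2 x b1 by auto
        qed
        have lastc: "last (x # ys) = c" using Q Qs by simp
        have "\<exists>z. z \<in> set P2 \<and> z \<in> set (x # ys)"
          apply (rule cross[OF chq _ c2(1) cov])
          using iP2 x 2 rightc lastc by auto
        then show False using nm Qs by auto
      next
        case 3
        have cov: "\<forall>q\<in>set P1. \<exists>p\<in>set Q. fst p = fst q"
        proof
          fix q assume q: "q \<in> set P1"
          show "\<exists>p\<in>set Q. fst p = fst q"
            using coverage[OF cq, of "fst q"] Q bP1[OF q] True a2 by auto
        qed
        have righta: "\<forall>p\<in>set Q. fst p = fst (last P1) \<longrightarrow> snd p < snd (last P1)"
        proof (intro ballI impI)
          fix p assume p: "p \<in> set Q" "fst p = fst (last P1)"
          have "snd p \<le> snd a" using bQ[OF p(1)] a1 ca by simp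
          moreover have "p \<noteq> a" using nm p aP1 by blast
          ultimately show "snd p < snd (last P1)" using p P1 by (cases p, cases a) auto
        qed
        have "\<exists>z. z \<in> set Q \<and> z \<in> set P1"
          apply (rule cross[OF c1(1) c1(2) cq(1) cov _ righta])
          using x 3 P1 by auto
        then show False using nm by auto
      qed
    next
      case False
      then have sj: "snd j = sl" using jb ib by auto
      have cov: "\<forall>q\<in>set Q. \<exists>p\<in>set P2. fst p = fst q"
      proof
        fix q assume q: "q \<in> set Q"
        show "\<exists>p\<in>set P2. fst p = fst q"
          using coverage[OF c2, of "fst q"] P2 bQ[OF q] False b1 by auto
      qed
      obtain p where p: "p \<in> set P2" "fst p = fst j" using cov jQ by auto
      have "snd j \<le> snd p" using bP2[OF p(1)] sj ib by simp
      moreover have "p \<noteq> j" using nm p jQ by blast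
      ultimately have "snd j < snd p" using p by (cases p, cases j) auto
      then have "\<exists>z. z \<in> set P2 \<and> z \<in> set Q"
        apply (intro cross[OF cq c2(1) cov])
        using p Q rightc by auto
      then show False using nm by auto
    qed
  qed
  then obtain z where z: "z \<in> set P1 \<or> z \<in> set P2" "z \<in> set Q" by auto
  have "reachable m n M i z"
    using z(1) reach_prefix[OF P1(1), of z] reach_prefix[OF P2(1), of z] P1(2) P2(2) by metis
  moreover have "reachable m n M z c" using reach_suffix[OF Q(1) z(2)] Q by simp
  ultimately show ?thesis by (rule reach_trans)
qed

theorem corollary1:
  fixes m n :: nat and M :: "nat \<Rightarrow> nat \<Rightarrow> nat"
    and rl ru sl su :: nat and i j a b c :: "nat \<times> nat"
  assumes "zero_one_matrix m n M"
    and "is_block m n rl ru sl su"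
    and "i \<in> input_boundary rl ru sl su"
    and "a \<in> output_boundary rl ru sl su" and "b \<in> output_boundary rl ru sl su"
    and "reachable m n M i a" and "reachable m n M i b"
    and "output_less rl ru sl su a b"
    and "j \<in> input_boundary rl ru sl su"
    and "c \<in> output_boundary rl ru sl su"
    and "reachable m n M j c"
    and "output_less rl ru sl su a c" and "output_less rl ru sl su c b"
  shows "reachable m n M i c"
proof (cases "snd c = su")
  case True
  have ab: "snd a = su" "fst a < fst c" "fst c \<le> fst b" "snd b \<le> su"
    using assms(4,5,10,12,13) True
    by (auto simp: output_boundary_def in_block_def output_less_def output_pos_def split: if_splits)
  show ?thesis by (rule main[OF assms(2,3,9) True ab assms(6,7,11)])
next
  case False
  have ab: "fst c = ru" "fst b = ru" "snd b < snd c" "snd c \<le> snd a" "fst a \<le> ru"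
    using assms(4,5,10,12,13) False
    by (auto simp: output_boundary_def in_block_def output_less_def output_pos_def split: if_splits)
  have blk: "is_block n m sl su rl ru" using assms(2) by (auto simp: is_block_def)
  have sw: "\<And>x. x \<in> input_boundary rl ru sl su \<Longrightarrow> prod.swap x \<in> input_boundary sl su rl ru"
    by (auto simp: input_boundary_def in_block_def)
  have "reachable n m (\<lambda>r s. M s r) (prod.swap i) (prod.swap c)"
    apply (rule main[OF blk sw[OF assms(3)] sw[OF assms(9)], of "prod.swap c" "prod.swap b" "prod.swap a"])
    using ab reach_swap[OF assms(6)] reach_swap[OF assms(7)] reach_swap[OF assms(11)] by auto
  from reach_swap[OF this] show ?thesis by simp
qed

end
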